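(* Let $n\ge3$ and let $i<j$ be integers with $i\ge-1$. Then for every $b\in\mathcal{N}_i$ and $b'\in\mathcal{N}_j$, the bracket $[b,b']$ is either $0$ or lies in the $\mathbb{Z}$-span $\mathbb{Z}\mathcal{N}_{j-1}$; that is, $[\mathcal{N}_i,\mathcal{N}_j]\subseteq\mathbb{Z}\mathcal{N}_{j-1}\cup\{0\}$.
   Context: Fix an integer $n\ge 3$. A partition is a sequence $\Lambda=(\lambda_j)_{j\ge1}$ of non-negative integers with finite support; $\mathrm{wt}(\Lambda)=\sum_j j\lambda_j$; $\mathrm{Part}(k)$ is the set of partitions with $\lambda_j=0$ for $j>k$. Write $x^\Lambda=\prod_j x_j^{\lambda_j}$, $\deg(x^\Lambda)=\sum_j\lambda_j$, and let $\partial_k$ be the partial derivative with respect to $x_k$. $\mathfrak{L}(n)$ is the free $\mathbb{Z}$-module with basis $\mathcal{B}=\{x^\Lambda\partial_k : 1\le k\le n,\ \Lambda\in\mathrm{Part}(k-1)\}$, a Lie ring with bracket defined on basis elements by $[x^\Lambda\partial_k,x^\Theta\partial_j]=\partial_j(x^\Lambda)x^\Theta\partial_k$ if $j<k$, $-x^\Lambda\partial_k(x^\Theta)\partial_j$ if $j>k$, $0$ if $j=k$, extended bilinearly. For an integer $i\ge-1$, let $r_i\in\{1,\dots,n-1\}$ with $i\equiv r_i\pmod{n-1}$ and $h_i=\lfloor (i-1)/(n-1)\rfloor+1$. Define $\mathrm{WD}(x^\Lambda\partial_k)=\mathrm{wt}(\Lambda)-\deg(x^\Lambda)+n-k$ and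 $\mathrm{lev}_i(x^\Lambda\partial_k)=h_i\,\mathrm{WD}(x^\Lambda\partial_k)+\deg(x^\Lambda)-1$. For $i\ge-1$, $\mathcal{N}_i=\{b\in\mathcal{B}: \mathrm{lev}_j(b)\le j\text{ for some integer } -1\le j\le i\}$; $\mathbb{Z}\mathcal{N}_i$ is its $\mathbb{Z}$-span in $\mathfrak{L}(n)$. *)

theory Defs
  imports Main
begin

text \<open>Partitions are functions nat => nat (index 0 is unused and forced to 0 in Part(k)).
 A basis element x^Lambda d_k is the pair (Lambda, k).
 Elements of L(n) are integer-valued functions on such pairs (coefficient vectors).\<close>

type_synonym partition = "nat \<Rightarrow> nat"
type_synonym bas = "partition \<times> nat"
type_synonym elem = "bas \<Rightarrow> int"

definition part_in :: "nat \<Rightarrow> partition \<Rightarrow> bool" where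
  "part_in k L \<longleftrightarrow> (\<forall>j. (j = 0 \<or> k < j) \<longrightarrow> L j = 0)"

definition wt :: "partition \<Rightarrow> nat" where
  "wt L = (\<Sum>j\<in>{j. L j \<noteq> 0}. j * L j)"

definition deg :: "partition \<Rightarrow> nat" where
  "deg L = (\<Sum>j\<in>{j. L j \<noteq> 0}. L j)"

definition basis :: "nat \<Rightarrow> bas set" where
  "basis n = {(L, k). 1 \<le> k \<and> k \<le> n \<and> part_in (k - 1) L}"

definition delta :: "bas \<Rightarrow> elem" where
  "delta b = (\<lambda>c. if c = b then 1 else 0)"

definition br_basis :: "bas \<Rightarrow> bas \<Rightarrow> elem" where
  "br_basis b b' = (case b of (L, k) \<Rightarrow> case b' of (T, j) \<Rightarrow>
     if j < k then (\<lambda>c. int (L j) * delta (\<lambda>m. (L(j := L j - 1)) m + T m, k) c)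
     else if k < j then (\<lambda>c. - int (T k) * delta (\<lambda>m. L m + (T(k := T k - 1)) m, j) c)
     else (\<lambda>c. 0))"

definition bracket :: "elem \<Rightarrow> elem \<Rightarrow> elem" where
  "bracket x y = (\<lambda>c. \<Sum>b\<in>{b. x b \<noteq> 0}. \<Sum>b'\<in>{b'. y b' \<noteq> 0}. x b * y b' * br_basis b b' c)"

definition WD :: "nat \<Rightarrow> bas \<Rightarrow> int" where
  "WD n b = (case b of (L, k) \<Rightarrow> int (wt L) - int (deg L) + int n - int k)"

definition h :: "nat \<Rightarrow> int \<Rightarrow> int" where
  "h n i = (i - 1) div (int n - 1) + 1"

definition lev :: "nat \<Rightarrow> int \<Rightarrow> bas \<Rightarrow> int" where
  "lev n i b = h n i * WD n b + int (deg (fst b)) - 1"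

definition NN :: "nat \<Rightarrow> int \<Rightarrow> bas set" where
  "NN n i = {b \<in> basis n. \<exists>j::int. -1 \<le> j \<and> j \<le> i \<and> lev n j b \<le> j}"

definition zspan :: "bas set \<Rightarrow> elem set" where
  "zspan S = {x. \<exists>F c. finite F \<and> F \<subseteq> S \<and> x = (\<lambda>d. \<Sum>b\<in>F. c b * delta b d)}"

end

theory Submission
  imports Defs
begin

definition HH :: "int \<Rightarrow> int \<Rightarrow> int" where "HH N x = (x - 1) div N + 1"

lemma HH_up: "N \<ge> 1 \<Longrightarrow> x \<le> N * HH N x"
proof -
  assume N: "N \<ge> 1"
  have e: "N * ((x-1) div N) + (x-1) mod N = x - 1" by (simp add: mult_div_mod_eq)
  have "(x-1) mod N < N" using N by simp
  moreover have "N * ((x-1) div N + 1) = N * ((x-1) div N) + N" by (simp add: algebra_simps)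
  ultimately show ?thesis unfolding HH_def using e by linarith
qed

lemma HH_low: "N \<ge> 1 \<Longrightarrow> N * HH N x \<le> x + N - 1"
proof -
  assume N: "N \<ge> 1"
  have e: "N * ((x-1) div N) + (x-1) mod N = x - 1" by (simp add: mult_div_mod_eq)
  have "(x-1) mod N \<ge> 0" using N by simp
  moreover have "N * ((x-1) div N + 1) = N * ((x-1) div N) + N" by (simp add: algebra_simps)
  ultimately show ?thesis unfolding HH_def using e by linarith
qed

lemma HH_mono: "N \<ge> 1 \<Longrightarrow> x \<le> y \<Longrightarrow> HH N x \<le> HH N y"
  unfolding HH_def by (simp add: zdiv_mono1)

lemma HH_nonneg: "N \<ge> 2 \<Longrightarrow> x \<ge> -1 \<Longrightarrow> HH N x \<ge> 0"
proof (rule ccontr)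
  assume a: "N \<ge> 2" "x \<ge> -1" "\<not> HH N x \<ge> 0"
  then have "HH N x \<le> -1" by simp
  then have "N * HH N x \<le> N * (-1)" using a(1) by (intro mult_left_mono) auto
  then show False using HH_up[of N x] a by simp
qed

lemma HH_step:
  assumes "N \<ge> 1" "p = N * k" "k = HH N p"
  shows "HH N (p + 1) = k + 1"
proof -
  have "HH N (p + 1) = p div N + 1" unfolding HH_def by simp
  also have "p div N = k" using assms(1,2) by simp
  finally show ?thesis .
qed

lemma bound_from_lev:
  fixes N A d p :: int
  assumes N: "N \<ge> 2" and d0: "d = 0 \<longrightarrow> A \<le> N" and d1: "d = 1 \<longrightarrow> A \<le> N - 1"
    and dn: "d \<ge> 0" and A: "A \<ge> 0"
    and Hp: "HH N p * A + d - 1 \<le> p" and p: "p \<ge> -1"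
  shows "A \<le> N"
proof (rule ccontr)
  assume "\<not> A \<le> N"
  then have "A - N \<ge> 1" by simp
  have hp: "HH N p \<ge> 0" using HH_nonneg N p by auto
  have "HH N p * (A - N) \<ge> 0" using hp \<open>A - N \<ge> 1\<close> by simp
  moreover have "p \<le> N * HH N p" using HH_up N by auto
  ultimately have "d \<le> 1" using Hp by (simp add: algebra_simps)
  then show False using d0 d1 dn \<open>\<not> A \<le> N\<close> by auto
qed

lemma key_arith:
  fixes N A B d e p q :: int
  assumes N: "N \<ge> 2" and A: "A \<ge> 0" and B: "B \<ge> 0" and dn: "d \<ge> 0" and en: "e \<ge> 0"
    and p: "p \<ge> -1" and q: "q \<ge> -1"
    and d0: "d = 0 \<longrightarrow> A \<le> N" and d1: "d = 1 \<longrightarrow> A \<le> N - 1"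
    and e0: "e = 0 \<longrightarrow> B \<le> N" and e1: "e = 1 \<longrightarrow> B \<le> N - 1"
    and B0: "B = 0 \<longrightarrow> d = 0 \<and> A = N"
    and Hp: "HH N p * A + d - 1 \<le> p" and Hq: "HH N q * B + e - 1 \<le> q"
  shows "HH N (max p (q - 1)) * (A + B - N) + (d + e - 1) - 1 \<le> max p (q - 1)"
proof -
  have N1: "N \<ge> 1" using N by simp
  have AN: "A \<le> N" using bound_from_lev[OF N d0 d1 dn A Hp p] .
  have BN: "B \<le> N" using bound_from_lev[OF N e0 e1 en B Hq q] .
  define hp where "hp = HH N p"
  define hq where "hq = HH N q"
  have Hp': "hp * A + d - 1 \<le> p" using Hp unfolding hp_def .
  have Hq': "hq * B + e - 1 \<le> q" using Hq unfolding hq_def .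
  have pu: "p \<le> N * hp" unfolding hp_def by (rule HH_up[OF N1])
  have qu: "q \<le> N * hq" unfolding hq_def by (rule HH_up[OF N1])
  show ?thesis
  proof (cases "q - 1 \<le> p")
    case True
    then have m: "max p (q - 1) = p" by simp
    have dist: "hp * (A + B - N) = hp * A + hp * (B - N)" by (simp add: algebra_simps)
    have G: "hp * (B - N) + e - 1 \<le> 0 \<or> (B = 0 \<and> e - 2 \<le> p)"
    proof (cases "hq \<ge> hp")
      case True
      have "hp * B \<le> hq * B" using True B by (rule mult_right_mono)
      then have hb: "hp * B + e - 1 \<le> q" using Hq' by linarith
      have d2: "hp * (B - N) = hp * B - N * hp" by (simp add: algebra_simps)
      show ?thesis
      proof (cases "q \<le> p \<or> p < N * hp")
        case True
        then have "hp * B + e - 1 \<le> N * hp" using hb pu \<open>q - 1 \<le> p\<close> by linarith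
        then show ?thesis using d2 by linarith
      next
        case False
        then have qp: "q = p + 1" and pe: "p = N * hp" using \<open>q - 1 \<le> p\<close> pu by auto
        have "hq = hp + 1" unfolding hq_def qp by (rule HH_step[OF N1 pe hp_def])
        then have "hq * B = hp * B + B" by (simp add: algebra_simps)
        then have hb2: "hp * B + B + e - 1 \<le> q" using Hq' by linarith
        show ?thesis
        proof (cases "B = 0")
          case True
          then show ?thesis using Hq' qp by simp
        next
          case False
          then show ?thesis using hb2 qp pe B d2 by linarith
        qed
      qed
    next
      case False
      have "hp * (B - N) \<le> hq * (B - N)" using False BN by (intro mult_right_mono_neg) auto
      moreover have "hq * (B - N) = hq * B - N * hq" by (simp add: algebra_simps)
      ultimately show ?thesis using Hq' qu by linarith
    qed
    show ?thesis
    proof (cases "B = 0 \<and> e - 2 \<le> p")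
      case True
      then have "d = 0" "A = N" using B0 by auto
      then show ?thesis using m True by simp
    next
      case False
      then have "hp * (B - N) + e - 1 \<le> 0" using G by auto
      then show ?thesis unfolding m hp_def[symmetric] using Hp' dist by linarith
    qed
  next
    case False
    then have m: "max p (q - 1) = q - 1" by simp
    define s where "s = HH N (q - 1)"
    have sp: "hp \<le> s" unfolding hp_def s_def using False HH_mono[OF N1, of p "q - 1"] by simp
    have sq: "s \<le> hq" unfolding hq_def s_def using HH_mono[OF N1, of "q - 1" q] by simp
    have su: "q - 1 \<le> N * s" unfolding s_def by (rule HH_up[OF N1])
    have "s * B \<le> hq * B" using sq B by (rule mult_right_mono)
    then have sb: "s * B + e - 1 \<le> q" using Hq' by linarith
    have dA: "s * (A - N) = s * A - N * s" by (simp add: algebra_simps)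
    have G2: "s * (A - N) + d \<le> 0"
    proof (cases "hp = s")
      case True
      then have "s * A + d - 1 \<le> q - 2" using Hp' False by simp
      then show ?thesis using su dA by linarith
    next
      case False
      then have "hp + 1 \<le> s" using sp by simp
      have "s * (A - N) \<le> (hp + 1) * (A - N)" using \<open>hp + 1 \<le> s\<close> AN
        by (intro mult_right_mono_neg) auto
      moreover have "(hp + 1) * (A - N) = hp * A - N * hp + A - N" by (simp add: algebra_simps)
      moreover have h1: "hp * A - N * hp + d \<le> 1" using Hp' pu by linarith
      ultimately have "s * (A - N) + d \<le> 1 + A - N" by linarith
      moreover have "A = N \<longrightarrow> d \<le> 0" using h1 d1 N by auto
      ultimately show ?thesis using AN by (cases "A = N") auto
    qed
    have "s * (A + B - N) = s * (A - N) + s * B" by (simp add: algebra_simps)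
    then show ?thesis using m sb G2 unfolding s_def by linarith
  qed
qed


lemma sum_range:
  assumes "part_in K L"
  shows "wt L = (\<Sum>j\<in>{1..K}. j * L j)" and "deg L = (\<Sum>j\<in>{1..K}. L j)"
proof -
  have sub: "{j. L j \<noteq> 0} \<subseteq> {1..K}"
  proof
    fix j assume "j \<in> {j. L j \<noteq> 0}"
    then have "L j \<noteq> 0" by simp
    have z: "L 0 = 0" "\<And>j. K < j \<Longrightarrow> L j = 0" using assms unfolding part_in_def by auto
    have "j \<noteq> 0" using z(1) \<open>L j \<noteq> 0\<close> by metis
    moreover have "\<not> K < j" using z(2) \<open>L j \<noteq> 0\<close> by metis
    ultimately show "j \<in> {1..K}" by auto
  qed
  show "wt L = (\<Sum>j\<in>{1..K}. j * L j)" unfolding wt_def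
    by (rule sum.mono_neutral_left) (use sub in auto)
  show "deg L = (\<Sum>j\<in>{1..K}. L j)" unfolding deg_def
    by (rule sum.mono_neutral_left) (use sub in auto)
qed

lemma part_in_mono: "part_in K L \<Longrightarrow> K \<le> K' \<Longrightarrow> part_in K' L"
  unfolding part_in_def by auto

lemma wt_split:
  assumes "part_in K L"
  shows "wt L = deg L + (\<Sum>j\<in>{1..K}. (j - 1) * L j)"
proof -
  have "(\<Sum>j\<in>{1..K}. j * L j) = (\<Sum>j\<in>{1..K}. L j + (j - 1) * L j)"
  proof (rule sum.cong)
    fix j assume "j \<in> {1..K}"
    then have "j = Suc (j - 1)" by auto
    then show "j * L j = L j + (j - 1) * L j" by (metis mult_Suc)
  qed simp
  then show ?thesis using sum_range[OF assms] by (simp add: sum.distrib)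
qed

lemma deg_le_wt: "part_in K L \<Longrightarrow> deg L \<le> wt L"
  using wt_split by fastforce

lemma wt_le: 
  assumes "part_in K L" shows "wt L \<le> K * deg L"
proof -
  have "(\<Sum>j\<in>{1..K}. j * L j) \<le> (\<Sum>j\<in>{1..K}. K * L j)"
    by (rule sum_mono) auto
  then show ?thesis using sum_range[OF assms] by (simp add: sum_distrib_left)
qed

lemma wt_single:
  assumes "part_in K L" "r \<ge> 1"
  shows "deg L + (r - 1) * L r \<le> wt L"
proof (cases "r \<le> K")
  case True
  have "(r - 1) * L r \<le> (\<Sum>j\<in>{1..K}. (j - 1) * L j)"
    by (rule member_le_sum) (use True assms(2) in auto)
  then show ?thesis using wt_split[OF assms(1)] by simp
next
  case False
  then have "L r = 0" using assms unfolding part_in_def by auto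
  then show ?thesis using deg_le_wt[OF assms(1)] by simp
qed

lemma part0: "part_in 0 L \<Longrightarrow> wt L = 0 \<and> deg L = 0"
  using sum_range[of 0 L] by simp

lemma basis_WD:
  assumes "(L, k) \<in> basis n"
  shows "0 \<le> WD n (L, k)" "deg L = 0 \<longrightarrow> WD n (L, k) \<le> int n - 1"
    "deg L = 1 \<longrightarrow> WD n (L, k) \<le> int n - 2"
proof -
  have k: "1 \<le> k" "k \<le> n" and P: "part_in (k - 1) L" using assms unfolding basis_def by auto
  have "deg L \<le> wt L" using deg_le_wt[OF P] .
  then show "0 \<le> WD n (L, k)" unfolding WD_def using k by simp
  have w: "wt L \<le> (k - 1) * deg L" using wt_le[OF P] .
  show "deg L = 0 \<longrightarrow> WD n (L, k) \<le> int n - 1" unfolding WD_def using w k by auto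
  show "deg L = 1 \<longrightarrow> WD n (L, k) \<le> int n - 2" unfolding WD_def using w k by auto
qed

lemma lev_goal:
  assumes n: "n \<ge> 3" and b: "(L, k) \<in> basis n" and b': "(T, r) \<in> basis n"
    and W: "WD n c0 = WD n (L, k) + WD n (T, r) - (int n - 1)"
    and D: "int (deg (fst c0)) = int (deg L) + int (deg T) - 1"
    and B0: "WD n (T, r) = 0 \<longrightarrow> deg L = 0 \<and> WD n (L, k) = int n - 1"
    and Hp: "lev n p (L, k) \<le> p" and p: "-1 \<le> p"
    and Hq: "lev n q (T, r) \<le> q" and q: "-1 \<le> q"
  shows "lev n (max p (q - 1)) c0 \<le> max p (q - 1)"
proof -
  have hH: "\<And>x. h n x = HH (int n - 1) x" unfolding h_def HH_def by simp
  have "HH (int n - 1) (max p (q - 1)) * (WD n (L, k) + WD n (T, r) - (int n - 1))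
      + (int (deg L) + int (deg T) - 1) - 1 \<le> max p (q - 1)"
  proof (rule key_arith)
    show "int n - 1 \<ge> 2" using n by simp
    show "HH (int n - 1) p * WD n (L, k) + int (deg L) - 1 \<le> p"
      using Hp unfolding lev_def hH by simp
    show "HH (int n - 1) q * WD n (T, r) + int (deg T) - 1 \<le> q"
      using Hq unfolding lev_def hH by simp
  qed (use basis_WD[OF b] basis_WD[OF b'] B0 p q in auto)
  then show ?thesis unfolding lev_def hH W D by simp
qed

lemma merge:
  assumes PL: "part_in K L" and PT: "part_in K T" and r: "1 \<le> r" "r \<le> K" and Lr: "L r \<ge> 1"
  defines "M \<equiv> (\<lambda>m. (L(r := L r - 1)) m + T m)"
  shows "part_in K M" "wt M + r = wt L + wt T" "deg M + 1 = deg L + deg T"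
proof -
  show PM: "part_in K M" using PL PT r unfolding part_in_def M_def by auto
  define L' where "L' = L(r := L r - 1)"
  have PL': "part_in K L'" using PL r unfolding part_in_def L'_def by auto
  have rA: "r \<in> {1..K}" using r by simp
  have Mdef: "\<And>m. M m = L' m + T m" unfolding M_def L'_def by simp
  have eqo: "\<And>j. j \<in> {1..K} - {r} \<Longrightarrow> L' j = L j" unfolding L'_def by simp
  have s1: "(\<Sum>j\<in>{1..K}. j * L j) = r * L r + (\<Sum>j\<in>{1..K} - {r}. j * L j)"
    using sum.remove[OF _ rA, of "\<lambda>j. j * L j"] by simp
  have s2: "(\<Sum>j\<in>{1..K}. j * L' j) = r * L' r + (\<Sum>j\<in>{1..K} - {r}. j * L' j)"
    using sum.remove[OF _ rA, of "\<lambda>j. j * L' j"] by simp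
  have s3: "(\<Sum>j\<in>{1..K} - {r}. j * L' j) = (\<Sum>j\<in>{1..K} - {r}. j * L j)"
    by (rule sum.cong) (auto simp: eqo)
  have Lr': "L' r + 1 = L r" unfolding L'_def using Lr by simp
  have "r * L' r + r = r * L r" using Lr' by (metis add_mult_distrib2 nat_mult_1_right)
  then have wL: "wt L' + r = wt L" using sum_range(1)[OF PL] sum_range(1)[OF PL'] s1 s2 s3 by simp
  have t1: "(\<Sum>j\<in>{1..K}. L j) = L r + (\<Sum>j\<in>{1..K} - {r}. L j)"
    using sum.remove[OF _ rA, of "\<lambda>j. L j"] by simp
  have t2: "(\<Sum>j\<in>{1..K}. L' j) = L' r + (\<Sum>j\<in>{1..K} - {r}. L' j)"
    using sum.remove[OF _ rA, of "\<lambda>j. L' j"] by simp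
  have t3: "(\<Sum>j\<in>{1..K} - {r}. L' j) = (\<Sum>j\<in>{1..K} - {r}. L j)"
    by (rule sum.cong) (auto simp: eqo)
  have dL: "deg L' + 1 = deg L" using sum_range(2)[OF PL] sum_range(2)[OF PL'] t1 t2 t3 Lr' by simp
  have "wt M = wt L' + wt T" using sum_range(1)[OF PM] sum_range(1)[OF PL'] sum_range(1)[OF PT]
    by (simp add: Mdef sum.distrib add_mult_distrib2)
  then show "wt M + r = wt L + wt T" using wL by simp
  have "deg M = deg L' + deg T" using sum_range(2)[OF PM] sum_range(2)[OF PL'] sum_range(2)[OF PT]
    by (simp add: Mdef sum.distrib)
  then show "deg M + 1 = deg L + deg T" using dL by simp
qed

lemma bracket_delta: "bracket (delta b) (delta b') = br_basis b b'"
proof -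
  have "\<And>b. {x. delta b x \<noteq> 0} = {b}" by (auto simp: delta_def)
  then show ?thesis unfolding bracket_def by (simp add: delta_def)
qed

theorem lemma3p1:
  fixes n :: nat and i j :: int and b b' :: bas
  assumes "n \<ge> 3" and "-1 \<le> i" and "i < j"
    and "b \<in> NN n i" and "b' \<in> NN n j"
  shows "bracket (delta b) (delta b') = (\<lambda>_. 0) \<or> bracket (delta b) (delta b') \<in> zspan (NN n (j - 1))"
proof -
  obtain L k where bk: "b = (L, k)" by (cases b)
  obtain T r where br: "b' = (T, r)" by (cases b')
  have bB: "(L, k) \<in> basis n" and bB': "(T, r) \<in> basis n"
    using assms(4,5) bk br unfolding NN_def by auto
  obtain p where p: "-1 \<le> p" "p \<le> i" "lev n p (L, k) \<le> p"
    using assms(4) bk unfolding NN_def by auto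
  obtain q where q: "-1 \<le> q" "q \<le> j" "lev n q (T, r) \<le> q"
    using assms(5) br unfolding NN_def by auto
  have k: "1 \<le> k" "k \<le> n" and PL: "part_in (k - 1) L" using bB unfolding basis_def by auto
  have r: "1 \<le> r" "r \<le> n" and PT: "part_in (r - 1) T" using bB' unfolding basis_def by auto
  define m where "m = max p (q - 1)"
  have m: "-1 \<le> m" "m \<le> j - 1" unfolding m_def using p q assms(3) by auto
  have zs: "(\<lambda>d. c * delta c0 d) \<in> zspan (NN n (j - 1))"
    if "c0 \<in> basis n" "lev n m c0 \<le> m" for c c0
  proof -
    have "c0 \<in> NN n (j - 1)" unfolding NN_def using that m by auto
    then show ?thesis unfolding zspan_def
      by (intro CollectI exI[of _ "{c0}"] exI[of _ "\<lambda>_. c"]) auto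
  qed
  have eq: "bracket (delta b) (delta b') = br_basis (L, k) (T, r)"
    using bracket_delta bk br by simp
  consider "r < k" | "k < r" | "r = k" by linarith
  then show ?thesis
  proof cases
    case 1
    define M where "M = (\<lambda>m. (L(r := L r - 1)) m + T m)"
    have bb: "br_basis (L, k) (T, r) = (\<lambda>c. int (L r) * delta (M, k) c)"
      unfolding br_basis_def M_def using 1 by simp
    show ?thesis
    proof (cases "L r = 0")
      case True
      then show ?thesis using eq bb by simp
    next
      case False
      have PT': "part_in (k - 1) T" using part_in_mono[OF PT] 1 by simp
      have mg1: "part_in (k - 1) M" "wt M + r = wt L + wt T" "deg M + 1 = deg L + deg T"
        using merge[OF PL PT' r(1), of] 1 False unfolding M_def by auto
      have cB: "(M, k) \<in> basis n" unfolding basis_def using mg1(1) k by simp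
      have W: "WD n (M, k) = WD n (L, k) + WD n (T, r) - (int n - 1)"
        using arg_cong[OF mg1(2), of int] unfolding WD_def
        using arg_cong[OF mg1(3), of int] by simp
      have D: "int (deg (fst (M, k))) = int (deg L) + int (deg T) - 1"
        using arg_cong[OF mg1(3), of int] by simp
      have B0: "WD n (T, r) \<noteq> 0" unfolding WD_def using deg_le_wt[OF PT] 1 k by simp
      have "lev n m (M, k) \<le> m" unfolding m_def
        by (rule lev_goal[OF assms(1) bB bB' W D _ p(3) p(1) q(3) q(1)]) (use B0 in simp)
      then show ?thesis using zs[OF cB] eq bb by simp
    qed
  next
    case 2
    define M where "M = (\<lambda>m. L m + (T(k := T k - 1)) m)"
    have bb: "br_basis (L, k) (T, r) = (\<lambda>c. - int (T k) * delta (M, r) c)"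
      unfolding br_basis_def M_def using 2 by simp
    show ?thesis
    proof (cases "T k = 0")
      case True
      then show ?thesis using eq bb by simp
    next
      case False
      have PL': "part_in (r - 1) L" using part_in_mono[OF PL] 2 by simp
      have Meq: "M = (\<lambda>m. (T(k := T k - 1)) m + L m)" unfolding M_def by (simp add: add.commute)
      have mg1: "part_in (r - 1) M" "wt M + k = wt T + wt L" "deg M + 1 = deg T + deg L"
        using merge[OF PT PL' k(1), of] 2 False unfolding Meq by auto
      have cB: "(M, r) \<in> basis n" unfolding basis_def using mg1(1) r by simp
      have W: "WD n (M, r) = WD n (L, k) + WD n (T, r) - (int n - 1)"
        using arg_cong[OF mg1(2), of int] unfolding WD_def
        using arg_cong[OF mg1(3), of int] by simp
      have D: "int (deg (fst (M, r))) = int (deg L) + int (deg T) - 1"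
        using arg_cong[OF mg1(3), of int] by simp
      have B0: "deg L = 0 \<and> WD n (L, k) = int n - 1" if "WD n (T, r) = 0"
      proof -
        have ws: "deg T + (k - 1) * T k \<le> wt T" using wt_single[OF PT k(1)] .
        have "k - 1 \<le> (k - 1) * T k" using False by simp
        then have "k - 1 + deg T \<le> wt T" using ws by linarith
        then have "int (k - 1) + int (deg T) \<le> int (wt T)" by (metis of_nat_add of_nat_le_iff)
        moreover have "int (wt T) - int (deg T) + int n - int r = 0" using that unfolding WD_def by simp
        ultimately have "int (k - 1) \<le> 0" using r by linarith
        then have "k = 1" using k by simp
        then have "wt L = 0 \<and> deg L = 0" using part0 PL by simp
        then show ?thesis unfolding WD_def using \<open>k = 1\<close> by simp
      qed
      have "lev n m (M, r) \<le> m" unfolding m_def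
        by (rule lev_goal[OF assms(1) bB bB' W D _ p(3) p(1) q(3) q(1)]) (use B0 in simp)
      then have "(\<lambda>d. (- int (T k)) * delta (M, r) d) \<in> zspan (NN n (j - 1))" using zs[OF cB] by blast
      then show ?thesis using eq bb by simp
    qed
  next
    case 3
    then show ?thesis using eq unfolding br_basis_def by simp
  qed
qed

end
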